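(* Let $p,q\in\mathbb{C}$ with $pq\neq1$ and $(p,q)\neq(\tfrac12,\tfrac12)$, and let $\xi_{p,q}\in\mathbb{P}^1(\mathbb{C})$ be as defined below. Then $\mathcal{S}_{p,q}$ is regular if and only if $\xi_{p,q}\neq\infty$ and $|\xi_{p,q}|\le1$. Moreover, if $\mathcal{S}_{p,q}$ is regular, then for every positive triangle triple $\Delta$ one has $\phi(\mathcal{S}_{p,q}(\Delta))=\xi_{p,q}^3\,\phi(\Delta)$.
   Context: $\omega=e^{2\pi i/3}$, $\mathcal{H}^+=\{z:\operatorname{Im}z>0\}$. A triangle triple is $(a,b,c)\in\mathbb{C}^3$ with pairwise distinct entries; it is positive if non-collinear and $\operatorname{Im}\frac{a-b}{c-b}>0$. For $pq\neq1$, $\alpha_{p,q}=\frac{p(1-q)}{1-pq}$, $\beta_{p,q}=\frac{q(1-p)}{1-pq}$, $\gamma_{p,q}=\frac{(1-p)(1-q)}{1-pq}$ and $\mathcal{S}_{p,q}(a,b,c)=(\alpha_{p,q}a+\beta_{p,q}b+\gamma_{p,q}c,\ \alpha_{p,q}b+\beta_{p,q}c+\gamma_{p,q}a,\ \alpha_{p,q}c+\beta_{p,q}a+\gamma_{p,q}b)$. $\mathcal{S}_{p,q}$ is called regular if either $p=q\neq\frac12$, or $p\neq q$ and $t_{p,q}:=\frac{(p-1)(2q-1)}{p-q}\in\mathbb{R}\cup\mathcal{H}^+$. Define $\xi_{p,q}=\frac{(p-q)+(p-1)(2q-1)\omega}{(p-q)+(p-1)(2q-1)\omega^2}\in\mathbb{P}^1(\mathbb{C})$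 (numerator and denominator do not both vanish when $(p,q)\neq(\frac12,\frac12)$, $pq\ne 1$). For a positive triangle triple $(a,b,c)$, its modulus is $\phi(a,b,c)=\left(\frac{a+b\omega+c\omega^2}{a+b\omega^2+c\omega}\right)^3$, which lies in the unit disk $\{|z|<1\}$. *)

theory Defs
  imports "HOL-Analysis.Analysis"
begin

definition omega :: complex where
  "omega = cis (2 * pi / 3)"

definition alpha_pq :: "complex \<Rightarrow> complex \<Rightarrow> complex" where
  "alpha_pq p q = p * (1 - q) / (1 - p * q)"

definition beta_pq :: "complex \<Rightarrow> complex \<Rightarrow> complex" where
  "beta_pq p q = q * (1 - p) / (1 - p * q)"

definition gamma_pq :: "complex \<Rightarrow> complex \<Rightarrow> complex" where
  "gamma_pq p q = (1 - p) * (1 - q) / (1 - p * q)"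

definition S_pq :: "complex \<Rightarrow> complex \<Rightarrow> complex \<times> complex \<times> complex \<Rightarrow> complex \<times> complex \<times> complex" where
  "S_pq p q t = (case t of (a, b, c) \<Rightarrow>
     (alpha_pq p q * a + beta_pq p q * b + gamma_pq p q * c,
      alpha_pq p q * b + beta_pq p q * c + gamma_pq p q * a,
      alpha_pq p q * c + beta_pq p q * a + gamma_pq p q * b))"

definition t_pq :: "complex \<Rightarrow> complex \<Rightarrow> complex" where
  "t_pq p q = (p - 1) * (2 * q - 1) / (p - q)"

definition regular_pq :: "complex \<Rightarrow> complex \<Rightarrow> bool" where
  "regular_pq p q \<longleftrightarrow>
     (p = q \<and> p \<noteq> 1/2) \<or> (p \<noteq> q \<and> (t_pq p q \<in> \<real> \<or> Im (t_pq p q) > 0))"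

text \<open>xi_{p,q} as a point of P^1(C), given by homogeneous coordinates [num : den];
  xi = infinity iff den = 0, otherwise xi = num / den.\<close>
definition xi_num :: "complex \<Rightarrow> complex \<Rightarrow> complex" where
  "xi_num p q = (p - q) + (p - 1) * (2 * q - 1) * omega"

definition xi_den :: "complex \<Rightarrow> complex \<Rightarrow> complex" where
  "xi_den p q = (p - q) + (p - 1) * (2 * q - 1) * omega ^ 2"

definition triangle_triple :: "complex \<times> complex \<times> complex \<Rightarrow> bool" where
  "triangle_triple t = (case t of (a, b, c) \<Rightarrow> a \<noteq> b \<and> b \<noteq> c \<and> a \<noteq> c)"

definition positive_triangle :: "complex \<times> complex \<times> complex \<Rightarrow> bool" where
  "positive_triangle t = (case t of (a, b, c) \<Rightarrow>
     triangle_triple (a, b, c) \<and> \<not> collinear {a, b, c} \<and> Im ((a - b) / (c - b)) > 0)"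

definition phi :: "complex \<times> complex \<times> complex \<Rightarrow> complex" where
  "phi t = (case t of (a, b, c) \<Rightarrow>
     ((a + b * omega + c * omega ^ 2) / (a + b * omega ^ 2 + c * omega)) ^ 3)"

end

theory Submission
  imports Defs
begin

lemma om: "omega = Complex (-1/2) (sqrt 3/2)"
  using sin_120' cos_120' by (simp add: omega_def cis.ctr mult.commute)

lemma om2: "omega^2 = cnj omega"
  by (simp add: om complex_eq_iff power2_eq_square field_simps)

lemma om3: "omega^3 = 1"
proof -
  have "omega^3 = omega * cnj omega" by (metis om2 power2_eq_square power3_eq_cube mult.assoc)
  also have "\<dots> = 1" by (simp add: om complex_eq_iff field_simps)
  finally show ?thesis .
qed

lemma omsum: "1 + omega + omega^2 = 0"
  by (simp add: om complex_eq_iff power2_eq_square)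

lemma numeq:
  assumes "p * q \<noteq> 1"
  shows "alpha_pq p q + gamma_pq p q * omega + beta_pq p q * omega^2 = xi_num p q / (1 - p*q)"
proof -
  have w2: "omega^2 = -1 - omega" using omsum by (simp add: algebra_simps eq_neg_iff_add_eq_0)
  have c: "1 - p*q \<noteq> 0" using assms by simp
  have "(alpha_pq p q + gamma_pq p q * omega + beta_pq p q * omega^2) * (1 - p*q)
     = p * (1 - q) + (1 - p) * (1 - q) * omega + q * (1 - p) * (-1 - omega)"
  proof -
    have "alpha_pq p q * (1 - p*q) = p * (1 - q)" "beta_pq p q * (1 - p*q) = q * (1 - p)"
      "gamma_pq p q * (1 - p*q) = (1 - p) * (1 - q)"
      using c unfolding alpha_pq_def beta_pq_def gamma_pq_def by simp_all
    then show ?thesis unfolding w2 by algebra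
  qed
  also have "\<dots> = xi_num p q" unfolding xi_num_def by (simp add: algebra_simps)
  finally show ?thesis using c by (simp add: eq_divide_eq)
qed

lemma deneq:
  assumes "p * q \<noteq> 1"
  shows "alpha_pq p q + gamma_pq p q * omega^2 + beta_pq p q * omega = xi_den p q / (1 - p*q)"
proof -
  have w: "omega = -1 - omega^2" using omsum by (simp add: algebra_simps eq_neg_iff_add_eq_0)
  have c: "1 - p*q \<noteq> 0" using assms by simp
  have "(alpha_pq p q + gamma_pq p q * omega^2 + beta_pq p q * omega) * (1 - p*q)
     = p * (1 - q) + (1 - p) * (1 - q) * omega^2 + q * (1 - p) * omega"
  proof -
    have "alpha_pq p q * (1 - p*q) = p * (1 - q)" "beta_pq p q * (1 - p*q) = q * (1 - p)"
      "gamma_pq p q * (1 - p*q) = (1 - p) * (1 - q)"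
      using c unfolding alpha_pq_def beta_pq_def gamma_pq_def by simp_all
    then show ?thesis by algebra
  qed
  also have "\<dots> = p * (1 - q) + (1 - p) * (1 - q) * omega^2 + q * (1 - p) * (-1 - omega^2)"
    using w by metis
  also have "\<dots> = xi_den p q" unfolding xi_den_def by (simp add: algebra_simps)
  finally show ?thesis using c by (simp add: eq_divide_eq)
qed

lemma part2:
  assumes "p * q \<noteq> 1"
  shows "phi (S_pq p q (a,b,c)) = (xi_num p q / xi_den p q) ^ 3 * phi (a,b,c)"
proof -
  define N where "N = xi_num p q / (1 - p*q)"
  define D where "D = xi_den p q / (1 - p*q)"
  have c: "1 - p*q \<noteq> 0" using assms by simp
  have w4: "omega^4 = omega" proof - have "omega^4 = omega^3 * omega" by (simp add: power_numeral_reduce) then show ?thesis using om3 by simp qed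
  have A: "(alpha_pq p q * a + beta_pq p q * b + gamma_pq p q * c) +
      (alpha_pq p q * b + beta_pq p q * c + gamma_pq p q * a) * omega +
      (alpha_pq p q * c + beta_pq p q * a + gamma_pq p q * b) * omega^2
      = N * (a + b * omega + c * omega^2)"
    unfolding N_def numeq[OF assms, symmetric]
    using om3 by algebra
  have B: "(alpha_pq p q * a + beta_pq p q * b + gamma_pq p q * c) +
      (alpha_pq p q * b + beta_pq p q * c + gamma_pq p q * a) * omega^2 +
      (alpha_pq p q * c + beta_pq p q * a + gamma_pq p q * b) * omega
      = D * (a + b * omega^2 + c * omega)"
    unfolding D_def deneq[OF assms, symmetric]
    using om3 by algebra
  have ND: "N / D = xi_num p q / xi_den p q" using c by (simp add: N_def D_def)
  show ?thesis
    unfolding S_pq_def phi_def using A B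
    apply (simp only: prod.case)
    by (metis ND times_divide_times_eq power_mult_distrib)
qed

lemma normdiff: "(cmod (1 + t * omega))^2 = (cmod (1 + t * cnj omega))^2 - 2 * sqrt 3 * Im t"
proof -
  have s3: "sqrt 3 * sqrt 3 = 3" by simp
  show ?thesis unfolding cmod_power2 om by (simp add: algebra_simps power2_eq_square)
qed

lemma keyt:
  shows "(1 + t * omega^2 \<noteq> 0 \<and> cmod ((1 + t * omega) / (1 + t * omega^2)) \<le> 1) \<longleftrightarrow> Im t \<ge> 0"
proof -
  have d: "(cmod (1 + t * omega))^2 = (cmod (1 + t * omega^2))^2 - 2 * sqrt 3 * Im t"
    using normdiff om2 by simp
  have s: "sqrt 3 > 0" by simp
  show ?thesis
  proof
    assume h: "1 + t * omega^2 \<noteq> 0 \<and> cmod ((1 + t * omega) / (1 + t * omega^2)) \<le> 1"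
    then have "cmod (1 + t * omega) / cmod (1 + t * omega^2) \<le> 1" "cmod (1 + t * omega^2) > 0"
      by (simp_all add: norm_divide)
    then have "cmod (1 + t * omega) \<le> cmod (1 + t * omega^2)"
      by (simp add: divide_le_eq_1_pos)
    then have "(cmod (1 + t * omega))^2 \<le> (cmod (1 + t * omega^2))^2"
      by (simp add: power_mono)
    then have "2 * sqrt 3 * Im t \<ge> 0" using d by linarith
    then show "Im t \<ge> 0" using s by (simp add: zero_le_mult_iff)
  next
    assume h: "Im t \<ge> 0"
    have nz: "1 + t * omega^2 \<noteq> 0"
    proof
      assume "1 + t * omega^2 = 0"
      then have "(cmod (1 + t * omega))^2 = - 2 * sqrt 3 * Im t" using d by simp
      moreover have "(cmod (1 + t * omega))^2 \<ge> 0" by simp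
      ultimately have "2 * sqrt 3 * Im t \<le> 0" by linarith
      then have "Im t \<le> 0" using s by (simp add: mult_le_0_iff)
      then have "Im t = 0" using h by linarith
      then have "(cmod (1 + t * omega)) = 0" using \<open>(cmod (1 + t * omega))^2 = - 2 * sqrt 3 * Im t\<close> by simp
      then have e1: "1 + t * omega = 0" by simp
      have "t * (omega - omega^2) = (1 + t * omega) - (1 + t * omega^2)" by (simp add: algebra_simps)
      also have "\<dots> = 0" using e1 \<open>1 + t * omega^2 = 0\<close> by simp
      finally have "t * (omega - omega^2) = 0" .
      moreover have "omega - omega^2 \<noteq> 0" using om2 by (simp add: om complex_eq_iff)
      ultimately have "t = 0" by simp
      then show False using e1 by simp
    qed
    have "2 * sqrt 3 * Im t \<ge> 0" using h by simp
    then have "(cmod (1 + t * omega))^2 \<le> (cmod (1 + t * omega^2))^2" using d by linarith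
    then have "cmod (1 + t * omega) \<le> cmod (1 + t * omega^2)"
      using power2_le_imp_le norm_ge_zero by blast
    then show "1 + t * omega^2 \<noteq> 0 \<and> cmod ((1 + t * omega) / (1 + t * omega^2)) \<le> 1"
      using nz by (simp add: norm_divide divide_le_eq_1)
  qed
qed

lemma part1:
  fixes p q :: complex
  assumes "p * q \<noteq> 1" and "(p, q) \<noteq> (1/2, 1/2)"
  shows "regular_pq p q \<longleftrightarrow> xi_den p q \<noteq> 0 \<and> cmod (xi_num p q / xi_den p q) \<le> 1"
proof (cases "p = q")
  case True
  then have p12: "p \<noteq> 1/2" using assms(2) by simp
  have p1: "p \<noteq> 1" using assms(1) True by auto
  have o0: "omega \<noteq> 0" by (simp add: om complex_eq_iff)
  have nz: "(p - 1) * (2 * p - 1) \<noteq> 0" proof -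
    have "2 * p - 1 \<noteq> 0" using p12 by (auto simp: field_simps)
    then show ?thesis using p1 by simp
  qed
  have reg: "regular_pq p q" using True p12 by (simp add: regular_pq_def)
  have den: "xi_den p q = (p - 1) * (2 * p - 1) * omega^2" using True by (simp add: xi_den_def)
  have num: "xi_num p q = (p - 1) * (2 * p - 1) * omega" using True by (simp add: xi_num_def)
  have co: "cmod omega = 1" by (simp add: om cmod_def power2_eq_square)
  have gen: "\<And>K w::complex. K \<noteq> 0 \<Longrightarrow> w \<noteq> 0 \<Longrightarrow> (K * w) / (K * w^2) = 1 / w"
    by (simp add: power2_eq_square)
  have "xi_num p q / xi_den p q = 1 / omega" unfolding num den by (rule gen[OF nz o0])
  then show ?thesis using reg den nz o0 co by (simp add: norm_divide)
next
  case False
  define t where "t = t_pq p q"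
  have pq: "p - q \<noteq> 0" using False by simp
  have tt: "(p - 1) * (2 * q - 1) = t * (p - q)" using pq by (simp add: t_def t_pq_def)
  have num: "xi_num p q = (p - q) * (1 + t * omega)" unfolding xi_num_def tt by (simp add: algebra_simps)
  have den: "xi_den p q = (p - q) * (1 + t * omega^2)" unfolding xi_den_def tt by (simp add: algebra_simps)
  have reg: "regular_pq p q \<longleftrightarrow> Im t \<ge> 0"
    using False unfolding regular_pq_def t_def[symmetric] by (auto simp: complex_is_Real_iff)
  have r: "xi_num p q / xi_den p q = (1 + t * omega) / (1 + t * omega^2)"
    using pq unfolding num den by simp
  have dd: "xi_den p q \<noteq> 0 \<longleftrightarrow> 1 + t * omega^2 \<noteq> 0" using pq den by simp
  show ?thesis unfolding r using reg keyt[of t] dd by blast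
qed

theorem mainTheorem3:
  fixes p q :: complex
  assumes "p * q \<noteq> 1" and "(p, q) \<noteq> (1/2, 1/2)"
  shows "(regular_pq p q \<longleftrightarrow> xi_den p q \<noteq> 0 \<and> cmod (xi_num p q / xi_den p q) \<le> 1)
    \<and> (regular_pq p q \<longrightarrow> (\<forall>\<Delta>. positive_triangle \<Delta> \<longrightarrow>
          phi (S_pq p q \<Delta>) = (xi_num p q / xi_den p q) ^ 3 * phi \<Delta>))"
proof -
  have "\<forall>\<Delta>. phi (S_pq p q \<Delta>) = (xi_num p q / xi_den p q) ^ 3 * phi \<Delta>"
    using part2[OF assms(1)] by auto
  then show ?thesis using part1[OF assms] by simp
qed

end
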